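(* Let $X \sim \pi_0$ on $\mathcal{X}$, let $X \to W \to Z = M(W)$ be a Markov chain where $M$ is $\varepsilon$-locally differentially private in the density sense (there is a $\sigma$-finite $\mu$ with $M(w)$ having density $q(\cdot\mid w)$ w.r.t. $\mu$ and $q(z\mid w)\le e^{\varepsilon} q(z\mid w')$ for all $z,w,w'$). Let $f : \mathcal{X} \to \mathbb{R}^k$ be measurable, $L_{\rm rec} : \mathbb{R}^k \times \mathbb{R}^k \to \mathbb{R}_+$ a measurable loss, $\alpha \ge 0$ and $p(\alpha) \in [0,1]$. Suppose that \[ \mathbb{P}_{\pi_0}\big(L_{\rm rec}(f(X), v_0) \le \alpha\big) \le p(\alpha) \quad \text{for all fixed } v_0 \in \mathbb{R}^k. \] Then $M$ is $(\alpha, e^{\varepsilon} p(\alpha), f)$-protected against reconstruction for $L_{\rm rec}$; that is, for every measurable estimator $\widehat v : \mathcal{Z} \to \mathbb{R}^k$ and (almost) every $z$, \[ \mathbb{P}\big(L_{\rm rec}(f(X), \widehat v(z)) \le \alpha \,\big|\, Z = z\big) \le e^{\varepsilon} p(\alpha). \]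
   Context: $\varepsilon$-local differential privacy of $M$: $\mathbb{P}(M(w)\in S)\le e^{\varepsilon}\mathbb{P}(M(w')\in S)$ for all inputs $w,w'$ and measurable $S$. A mechanism $M$ is $(\alpha,p,f)$-protected against reconstruction for loss $L_{\rm rec}$ if for every estimator $\widehat v:\mathcal Z\to\mathbb R^k$, $\sup_z \mathbb P(L_{\rm rec}(f(X),\widehat v(z))\le\alpha \mid M(W)=z)\le p$. *)

theory Defs
  imports "HOL-Probability.Probability"
begin

text \<open>Setting: X ~ pi0 (probability measure on the X-space), W | X = x ~ K x
  (a Markov kernel into Ws), Z = M(W) with M(w) having density q w w.r.t. mu.\<close>

text \<open>Joint density of (X,Z) w.r.t. pi0 (x) mu: g(x,z) = integral of q(z|w) against K x.\<close>
definition lik :: "('x \<Rightarrow> 'w measure) \<Rightarrow> ('w \<Rightarrow> 'z \<Rightarrow> ennreal) \<Rightarrow> 'x \<Rightarrow> 'z \<Rightarrow> ennreal" where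
  "lik K q x z = (\<integral>\<^sup>+ w. q w z \<partial>K x)"

definition marg_dens :: "'x measure \<Rightarrow> ('x \<Rightarrow> 'w measure) \<Rightarrow> ('w \<Rightarrow> 'z \<Rightarrow> ennreal) \<Rightarrow> 'z \<Rightarrow> ennreal" where
  "marg_dens pi0 K q z = (\<integral>\<^sup>+ x. lik K q x z \<partial>pi0)"

text \<open>Conditional probability P(X in A | Z = z) by Bayes' formula
  (meaningful where the marginal density is positive and finite).\<close>
definition cond_prob :: "'x measure \<Rightarrow> ('x \<Rightarrow> 'w measure) \<Rightarrow> ('w \<Rightarrow> 'z \<Rightarrow> ennreal) \<Rightarrow> 'x set \<Rightarrow> 'z \<Rightarrow> real" where
  "cond_prob pi0 K q A z =
     enn2real (set_nn_integral pi0 A (\<lambda>x. lik K q x z)) / enn2real (marg_dens pi0 K q z)"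

definition ldp_density :: "real \<Rightarrow> 'w measure \<Rightarrow> 'z measure \<Rightarrow> ('w \<Rightarrow> 'z \<Rightarrow> ennreal) \<Rightarrow> bool" where
  "ldp_density \<epsilon> Ws mu q \<longleftrightarrow>
     sigma_finite_measure mu \<and>
     (\<lambda>(w, z). q w z) \<in> borel_measurable (Ws \<Otimes>\<^sub>M mu) \<and>
     (\<forall>w\<in>space Ws. prob_space (density mu (q w))) \<and>
     (\<forall>z\<in>space mu. \<forall>w\<in>space Ws. \<forall>w'\<in>space Ws. q w z \<le> ennreal (exp \<epsilon>) * q w' z)"

text \<open>(alpha,p,f)-protection against reconstruction for the loss L: for every measurable
  estimator vhat and every z (with positive finite marginal density, i.e. almost every z),
  P(L(f X, vhat z) <= alpha | Z = z) <= p.\<close>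
definition protected_rec ::
  "'x measure \<Rightarrow> ('x \<Rightarrow> 'w measure) \<Rightarrow> 'z measure \<Rightarrow> ('w \<Rightarrow> 'z \<Rightarrow> ennreal)
   \<Rightarrow> ('x \<Rightarrow> real^'k) \<Rightarrow> (real^'k \<Rightarrow> real^'k \<Rightarrow> real) \<Rightarrow> real \<Rightarrow> real \<Rightarrow> bool" where
  "protected_rec pi0 K mu q f L \<alpha> p \<longleftrightarrow>
     (\<forall>vhat \<in> borel_measurable mu. \<forall>z\<in>space mu.
        0 < marg_dens pi0 K q z \<and> marg_dens pi0 K q z < \<infinity> \<longrightarrow>
        cond_prob pi0 K q {x\<in>space pi0. L (f x) (vhat z) \<le> \<alpha>} z \<le> p)"

end

theory Submission
  imports Defs
begin

theorem lemma2p2: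
  fixes pi0 :: "'x measure" and Ws :: "'w measure" and mu :: "'z measure"
    and K :: "'x \<Rightarrow> 'w measure" and q :: "'w \<Rightarrow> 'z \<Rightarrow> ennreal"
    and f :: "'x \<Rightarrow> real^'k" and L :: "real^'k \<Rightarrow> real^'k \<Rightarrow> real"
    and \<epsilon> \<alpha> p :: real
  assumes "prob_space pi0"
    and "K \<in> measurable pi0 (prob_algebra Ws)"
    and "ldp_density \<epsilon> Ws mu q"
    and "f \<in> borel_measurable pi0"
    and "(\<lambda>(u, v). L u v) \<in> borel_measurable borel"
    and "\<forall>u v. 0 \<le> L u v"
    and "0 \<le> \<alpha>" and "0 \<le> p" and "p \<le> 1"
    and "\<forall>v0. measure pi0 {x\<in>space pi0. L (f x) v0 \<le> \<alpha>} \<le> p"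
  shows "protected_rec pi0 K mu q f L \<alpha> (exp \<epsilon> * p)"
  unfolding protected_rec_def
proof (intro ballI impI)
  fix vhat z
  assume z: "z \<in> space mu" and mz: "0 < marg_dens pi0 K q z \<and> marg_dens pi0 K q z < \<infinity>"
  interpret P: prob_space pi0 by fact
  define A where "A = {x\<in>space pi0. L (f x) (vhat z) \<le> \<alpha>}"
  define g where "g = (\<lambda>x. lik K q x z)"
  define e where "e = ennreal (exp \<epsilon>)"
  have qmeas: "(\<lambda>(w, z). q w z) \<in> borel_measurable (Ws \<Otimes>\<^sub>M mu)"
    and qldp: "\<forall>z\<in>space mu. \<forall>w\<in>space Ws. \<forall>w'\<in>space Ws. q w z \<le> ennreal (exp \<epsilon>) * q w' z"
    using assms(3) unfolding ldp_density_def by auto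
  have qz: "(\<lambda>w. q w z) \<in> borel_measurable Ws"
  proof -
    have "(\<lambda>w. (w, z)) \<in> Ws \<rightarrow>\<^sub>M Ws \<Otimes>\<^sub>M mu" using z by measurable
    from measurable_comp[OF this qmeas] show ?thesis by (simp add: o_def)
  qed
  have Kx: "sets (K x) = sets Ws \<and> prob_space (K x)" if "x \<in> space pi0" for x
    using measurable_space[OF assms(2) that] by (simp add: space_prob_algebra)
  have Ksp: "space (K x) = space Ws" if "x \<in> space pi0" for x
    using Kx[OF that] sets_eq_imp_space_eq by blast
  have qmK: "(\<lambda>w. q w z) \<in> borel_measurable (K x)" if "x \<in> space pi0" for x
    by (subst measurable_cong_sets[OF Kx[OF that, THEN conjunct1] refl]) (rule qz)
  have gmeas: "g \<in> borel_measurable pi0"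
  proof -
    have "(\<lambda>M. integral\<^sup>N M (\<lambda>w. q w z)) \<in> borel_measurable (subprob_algebra Ws)"
      using qz by (rule nn_integral_measurable_subprob_algebra)
    from measurable_comp[OF measurable_prob_algebraD[OF assms(2)] this]
    show ?thesis unfolding g_def lik_def by (simp add: o_def)
  qed
  have up: "g x \<le> e * q w' z" if "x \<in> space pi0" "w' \<in> space Ws" for x w'
  proof -
    interpret Q: prob_space "K x" using Kx[OF that(1)] by auto
    have "g x \<le> (\<integral>\<^sup>+ w. e * q w' z \<partial>K x)"
      unfolding g_def lik_def e_def
      by (rule nn_integral_mono) (use qldp z that Ksp in auto)
    also have "\<dots> = e * q w' z" by (simp add: Q.emeasure_space_1)
    finally show ?thesis .
  qed
  have cmp: "g x \<le> e * g x'" if "x \<in> space pi0" "x' \<in> space pi0" for x x'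
  proof -
    interpret Q: prob_space "K x'" using Kx[OF that(2)] by auto
    have "g x = (\<integral>\<^sup>+ w. g x \<partial>K x')" by (simp add: Q.emeasure_space_1)
    also have "\<dots> \<le> (\<integral>\<^sup>+ w. e * q w z \<partial>K x')"
      by (rule nn_integral_mono) (use up that Ksp in auto)
    also have "\<dots> = e * g x'"
      unfolding g_def lik_def using qmK[OF that(2)] by (rule nn_integral_cmult)
    finally show ?thesis .
  qed
  have Ameas: "A \<in> sets pi0"
  proof -
    have "(\<lambda>x. (f x, vhat z)) \<in> pi0 \<rightarrow>\<^sub>M borel \<Otimes>\<^sub>M borel"
      using assms(4) by measurable
    hence "(\<lambda>x. (f x, vhat z)) \<in> pi0 \<rightarrow>\<^sub>M borel" by (simp add: borel_prod)
    from measurable_comp[OF this assms(5)]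
    have "(\<lambda>x. L (f x) (vhat z)) \<in> borel_measurable pi0" by (simp add: o_def)
    thus ?thesis unfolding A_def by measurable
  qed
  have pA: "emeasure pi0 A \<le> ennreal p"
    using assms(10) Ameas unfolding A_def by (simp add: P.emeasure_eq_measure ennreal_leI)
  define S where "S = set_nn_integral pi0 A g"
  have S1: "S \<le> e * ennreal p * g x'" if "x' \<in> space pi0" for x'
  proof -
    have "S \<le> (\<integral>\<^sup>+ x. (e * g x') * indicator A x \<partial>pi0)"
      unfolding S_def
      by (rule nn_integral_mono) (use cmp that in \<open>auto simp: indicator_def\<close>)
    also have "\<dots> = e * g x' * emeasure pi0 A"
      using nn_integral_cmult_indicator[OF Ameas] by simp
    also have "\<dots> \<le> e * g x' * ennreal p" using pA by (intro mult_left_mono) auto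
    finally show ?thesis by (simp add: ac_simps)
  qed
  have S2: "S \<le> e * ennreal p * marg_dens pi0 K q z"
  proof -
    have "S = (\<integral>\<^sup>+ x. S \<partial>pi0)" by (simp add: P.emeasure_space_1)
    also have "\<dots> \<le> (\<integral>\<^sup>+ x. e * ennreal p * g x \<partial>pi0)"
      by (rule nn_integral_mono) (use S1 in auto)
    also have "\<dots> = e * ennreal p * marg_dens pi0 K q z"
      unfolding marg_dens_def using gmeas g_def by (simp add: nn_integral_cmult)
    finally show ?thesis .
  qed
  have mpos: "0 < enn2real (marg_dens pi0 K q z)"
    using mz by (simp add: enn2real_positive_iff)
  have "enn2real S \<le> enn2real (e * ennreal p * marg_dens pi0 K q z)"
    using S2 mz by (intro enn2real_mono) (auto simp: e_def ennreal_mult_less_top)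
  also have "\<dots> = exp \<epsilon> * p * enn2real (marg_dens pi0 K q z)"
    using assms(8) by (simp add: e_def enn2real_mult)
  finally have "enn2real S \<le> exp \<epsilon> * p * enn2real (marg_dens pi0 K q z)" .
  thus "cond_prob pi0 K q {x\<in>space pi0. L (f x) (vhat z) \<le> \<alpha>} z \<le> exp \<epsilon> * p"
    unfolding cond_prob_def using mpos
    by (simp add: S_def g_def A_def[symmetric] divide_le_eq)
qed

end
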